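(* Let $\lambda$ be an uncountable regular cardinal, $S\subseteq S^\lambda_\omega$ stationary, and $\vec C=\langle C_\delta\mid\delta\in S\rangle$ a club-guessing sequence on $S$. Let $n<\omega$ and let $t:2n\to 2$ be a disjoint type of length $n$. Then there are $\gamma<\delta$, both in $S$, such that $C_\gamma[n]$ and $C_\delta[n]$ are disjoint and $\mathrm{tp}(C_\gamma[n],C_\delta[n])=t$.
   Context: $S^\lambda_\omega=\{\alpha<\lambda\mid\mathrm{cf}(\alpha)=\omega\}$. A club-guessing sequence on $S\subseteq S^\lambda_\omega$ is a sequence $\langle C_\delta\mid\delta\in S\rangle$ such that each $C_\delta$ is a club in $\delta$ of order type $\omega$, and for every club $D\subseteq\lambda$ there are stationarily many $\delta\in S$ with $C_\delta\subseteq D$. For a set of ordinals $A$ and $i<\mathrm{otp}(A)$, $A(i)$ is the unique $\alpha\in A$ with $\mathrm{otp}(A\cap\alpha)=i$, and for $I\subseteq\mathrm{otp}(A)$, $A[I]=\{A(i)\mid i\in I\}$; here $n=\{0,\dots,n-1\}$, so $C_\delta[n]$ is the set of the first $n$ elements of $C_\delta$. A disjoint type of length $n$ is a function $t:2n\to 2$ taking the value $0$ exactly $n$ times and the value $1$ exactly $n$ times. For disjoint $n$-element sets of ordinals $a,b$, $\mathrm{tp}(a,b)$ is the unique disjoint type $t$ of length $n$ such that, enumerating $a\cup b$ increasingly as $\alpha_0<\dots<\alpha_{2n-1}$, we have $a=\{\alpha_i\mid t(i)=0\}$ and $b=\{\alpha_i\mid t(i)=1\}$. *)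

theory Defs
  imports Main "HOL-Library.Countable_Set"
begin

text \<open>The cardinal lambda is modelled as the set of ordinals below it, i.e. as a
well-ordered type 'a (elements of 'a = ordinals alpha < lambda).\<close>

definition unbounded :: "'a::wellorder set \<Rightarrow> bool" where
  "unbounded X \<longleftrightarrow> (\<forall>a. \<exists>x\<in>X. a \<le> x)"

text \<open>lambda (= order type of 'a) is an uncountable regular cardinal:
 uncountable; every proper initial segment has strictly smaller cardinality
 (so the order type is a cardinal); every unbounded subset has full
 cardinality (regularity).\<close>
definition uncountable_regular_cardinal :: "'a::wellorder itself \<Rightarrow> bool" where
  "uncountable_regular_cardinal _ \<longleftrightarrow>
     \<not> countable (UNIV :: 'a set) \<and>
     (\<forall>a::'a. \<not> (\<exists>f::'a \<Rightarrow> 'a. inj f \<and> range f \<subseteq> {..<a})) \<and>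
     (\<forall>X::'a set. unbounded X \<longrightarrow> (\<exists>f::'a \<Rightarrow> 'a. inj f \<and> range f \<subseteq> X))"

definition club :: "'a::wellorder set \<Rightarrow> bool" where
  "club D \<longleftrightarrow> unbounded D \<and>
     (\<forall>\<alpha>. (\<exists>b. b < \<alpha>) \<and> (\<forall>b<\<alpha>. \<exists>d\<in>D. b < d \<and> d < \<alpha>) \<longrightarrow> \<alpha> \<in> D)"

definition stationary :: "'a::wellorder set \<Rightarrow> bool" where
  "stationary S \<longleftrightarrow> (\<forall>D. club D \<longrightarrow> S \<inter> D \<noteq> {})"

definition cof_omega :: "'a::wellorder \<Rightarrow> bool" where
  "cof_omega \<alpha> \<longleftrightarrow> (\<exists>f::nat \<Rightarrow> 'a. strict_mono f \<and> (\<forall>n. f n < \<alpha>) \<and>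
                         (\<forall>b<\<alpha>. \<exists>n. b < f n))"

definition club_in :: "'a::wellorder \<Rightarrow> 'a set \<Rightarrow> bool" where
  "club_in \<delta> C \<longleftrightarrow> C \<subseteq> {..<\<delta>} \<and> (\<forall>b<\<delta>. \<exists>c\<in>C. b < c) \<and>
     (\<forall>\<alpha><\<delta>. (\<exists>b. b < \<alpha>) \<and> (\<forall>b<\<alpha>. \<exists>c\<in>C. b < c \<and> c < \<alpha>) \<longrightarrow> \<alpha> \<in> C)"

definition otp_omega :: "'a::wellorder set \<Rightarrow> bool" where
  "otp_omega C \<longleftrightarrow> (\<exists>f::nat \<Rightarrow> 'a. strict_mono f \<and> range f = C)"

definition club_guessing :: "'a::wellorder set \<Rightarrow> ('a \<Rightarrow> 'a set) \<Rightarrow> bool" where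
  "club_guessing S C \<longleftrightarrow>
     (\<forall>\<delta>\<in>S. club_in \<delta> (C \<delta>) \<and> otp_omega (C \<delta>)) \<and>
     (\<forall>D. club D \<longrightarrow> stationary {\<delta>\<in>S. C \<delta> \<subseteq> D})"

text \<open>A[n]: the elements A(i) with i < n, i.e. those a in A with
 otp(A \<inter> a) = i < n (otp of a finite set is its cardinality).\<close>
definition first_n :: "'a::wellorder set \<Rightarrow> nat \<Rightarrow> 'a set" where
  "first_n A n = {a\<in>A. finite {b\<in>A. b < a} \<and> card {b\<in>A. b < a} < n}"

definition disjoint_type :: "nat \<Rightarrow> (nat \<Rightarrow> nat) \<Rightarrow> bool" where
  "disjoint_type n t \<longleftrightarrow> (\<forall>i<2*n. t i \<in> {0,1}) \<and>
     card {i. i < 2*n \<and> t i = 0} = n \<and> card {i. i < 2*n \<and> t i = 1} = n"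

definition tp :: "'a::wellorder set \<Rightarrow> 'a set \<Rightarrow> nat \<Rightarrow> nat" where
  "tp a b i = (if sorted_list_of_set (a \<union> b) ! i \<in> a then 0 else 1)"

end

theory Submission
  imports Defs
begin
lemma no_max:
  assumes "uncountable_regular_cardinal TYPE('a::wellorder)"
  shows "\<exists>y. (x::'a) < y"
proof (rule ccontr)
  assume "\<not> ?thesis"
  hence "unbounded {x}" unfolding unbounded_def by (auto simp: not_less)
  with assms obtain f :: "'a \<Rightarrow> 'a" where "inj f" "range f \<subseteq> {x}"
    unfolding uncountable_regular_cardinal_def by blast
  have "u = x" for u
  proof -
    have "f u = x" "f x = x" using \<open>range f \<subseteq> {x}\<close> by auto
    hence "f u = f x" by simp
    thus "u = x" using injD[OF \<open>inj f\<close>] by blast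
  qed
  hence "(UNIV::'a set) \<subseteq> {x}" by auto
  hence "countable (UNIV::'a set)" by (meson countable_empty countable_insert countable_subset)
  with assms show False unfolding uncountable_regular_cardinal_def by blast
qed

lemma bounded_countable:
  assumes "uncountable_regular_cardinal TYPE('a::wellorder)" "countable (X::'a set)"
  shows "\<exists>b. \<forall>y\<in>X. y < b"
proof (rule ccontr)
  assume "\<not> ?thesis"
  hence "unbounded X" unfolding unbounded_def by (auto simp: not_less)
  with assms obtain f :: "'a \<Rightarrow> 'a" where "inj f" "range f \<subseteq> X"
    unfolding uncountable_regular_cardinal_def by blast
  hence "countable (range f)" using assms(2) countable_subset by blast
  hence "countable (UNIV::'a set)" using \<open>inj f\<close> countable_image_inj_on by blast
  with assms show False unfolding uncountable_regular_cardinal_def by blast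
qed

lemma bounded_image:
  assumes "uncountable_regular_cardinal TYPE('a::wellorder)"
  shows "\<exists>b. \<forall>a<(x::'a). (h a::'a) < b"
proof (rule ccontr)
  assume "\<not> ?thesis"
  hence "unbounded (h ` {..<x})" unfolding unbounded_def by (auto simp: not_less)
  with assms obtain f :: "'a \<Rightarrow> 'a" where f: "inj f" "range f \<subseteq> h ` {..<x}"
    unfolding uncountable_regular_cardinal_def by blast
  define g where "g u = inv_into {..<x} h (f u)" for u
  have "range g \<subseteq> {..<x}" unfolding g_def using f(2) by (metis image_subset_iff inv_into_into rangeI subsetD)
  moreover have "inj g"
  proof (rule injI)
    fix u v assume "g u = g v"
    hence "h (g u) = h (g v)" by simp
    moreover have "h (g w) = f w" for w unfolding g_def using f(2) by (meson f_inv_into_f rangeI subsetD)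
    ultimately show "u = v" using f(1) by (metis injD)
  qed
  ultimately show False using assms unfolding uncountable_regular_cardinal_def by blast
qed


lemma club_UNIV:
  assumes "uncountable_regular_cardinal TYPE('a::wellorder)"
  shows "club (UNIV::'a set)"
  unfolding club_def unbounded_def by auto

lemma diag_club:
  fixes D :: "'a::wellorder \<Rightarrow> 'a set" and \<xi> :: 'a
  assumes R: "uncountable_regular_cardinal TYPE('a)" and cl: "\<And>a. club (D a)"
  shows "club {x. \<xi> < x \<and> (\<forall>a<x. x \<in> D a)}" (is "club ?E")
proof -
  define nxt where "nxt a y = (LEAST d. d \<in> D a \<and> y < d)" for a y
  have nxt: "nxt a y \<in> D a \<and> y < nxt a y" for a y
  proof -
    obtain y' where "y < y'" using no_max[OF R] by blast
    moreover have "unbounded (D a)" using cl[of a] unfolding club_def by (rule conjunct1)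
    then obtain d where "d \<in> D a" "y' \<le> d" unfolding unbounded_def by blast
    ultimately have "d \<in> D a \<and> y < d" by simp
    thus ?thesis unfolding nxt_def by (rule LeastI)
  qed
  have step: "\<exists>b. y < b \<and> (\<forall>a<y. nxt a y < b)" for y
  proof -
    obtain b where b: "\<forall>a<y. nxt a y < b" using bounded_image[OF R, of y "\<lambda>a. nxt a y"] by blast
    obtain c where c: "y < c" using no_max[OF R] by blast
    have "y < max b c" using c by (simp add: less_max_iff_disj)
    moreover have "\<forall>a<y. nxt a y < max b c" using b by (simp add: less_max_iff_disj)
    ultimately show ?thesis by blast
  qed
  define st where "st y = (SOME b. y < b \<and> (\<forall>a<y. nxt a y < b))" for y
  have st: "y < st y \<and> (\<forall>a<y. nxt a y < st y)" for y
    unfolding st_def using someI_ex[OF step] .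
  have unb: "\<exists>z\<in>?E. \<beta> \<le> z" for \<beta>
  proof -
    obtain c where c: "\<xi> < c" using no_max[OF R] by blast
    define x where "x k = (st ^^ k) (max c \<beta>)" for k
    have xs: "x (Suc k) = st (x k)" for k unfolding x_def by simp
    have inc: "x k < x (Suc k)" for k using st xs by simp
    have mono: "k < l \<Longrightarrow> x k < x l" for k l using lift_Suc_mono_less[of x, OF inc] by blast
    have mono': "k \<le> l \<Longrightarrow> x k \<le> x l" for k l using mono by (cases "k = l") (auto simp: order.strict_implies_order)
    obtain B where B: "\<forall>y\<in>range x. y < B" using bounded_countable[OF R, of "range x"] by blast
    define L where "L = (LEAST z. \<forall>k. x k \<le> z)"
    have "\<forall>k. x k \<le> L" unfolding L_def by (rule LeastI[of _ B]) (use B in \<open>auto intro: less_imp_le\<close>)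
    hence Lgt: "x k < L" for k using less_le_trans[OF inc[of k]] by blast
    have Llim: "b < L \<Longrightarrow> \<exists>k. b < x k" for b
    proof (rule ccontr)
      assume "b < L" "\<nexists>k. b < x k"
      hence "\<forall>k. x k \<le> b" by (auto simp: not_less)
      hence "L \<le> b" unfolding L_def by (rule Least_le)
      with \<open>b < L\<close> show False by simp
    qed
    have x0: "max c \<beta> = x 0" unfolding x_def by simp
    have "L \<in> ?E"
    proof (intro CollectI conjI allI impI)
      have "c \<le> x 0" using x0 by (metis max.cobounded1)
      hence "c < L" using Lgt[of 0] by (rule le_less_trans)
      thus "\<xi> < L" using c by (rule less_trans[rotated])
    next
      fix a assume "a < L"
      then obtain m where m: "a < x m" using Llim by blast
      show "L \<in> D a"
      proof -
        have C: "\<forall>\<alpha>. (\<exists>b. b < \<alpha>) \<and> (\<forall>b<\<alpha>. \<exists>d\<in>D a. b < d \<and> d < \<alpha>) \<longrightarrow> \<alpha> \<in> D a"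
          using cl[of a] unfolding club_def by (rule conjunct2)
        have "\<forall>b<L. \<exists>d\<in>D a. b < d \<and> d < L"
        proof (intro allI impI)
          fix b assume "b < L"
          then obtain k where k: "b < x k" using Llim by blast
          define k' where "k' = max k m"
          have "a < x k'" using m mono'[of m k'] unfolding k'_def by simp
          hence "nxt a (x k') < x (Suc k')" using st xs by simp
          moreover have "b < x k'" using k mono'[of k k'] unfolding k'_def by simp
          moreover have "x (Suc k') < L" by (rule Lgt)
          ultimately have "b < nxt a (x k')" "nxt a (x k') < L" using nxt[of a "x k'"] by (blast intro: less_trans)+
          thus "\<exists>d\<in>D a. b < d \<and> d < L" using nxt[of a "x k'"] by blast
        qed
        thus "L \<in> D a" using C Lgt[of 0] by blast
      qed
    qed
    moreover have "\<beta> \<le> x 0" using x0 by (metis max.cobounded2)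
    hence "\<beta> \<le> L" using Lgt[of 0] by simp
    ultimately show ?thesis by blast
  qed
  show ?thesis unfolding club_def
  proof (intro conjI allI impI)
    show "unbounded ?E" unfolding unbounded_def using unb by blast
  next
    fix \<alpha> assume A: "(\<exists>b. b < \<alpha>) \<and> (\<forall>b<\<alpha>. \<exists>d\<in>?E. b < d \<and> d < \<alpha>)"
    then obtain d where d: "d \<in> ?E" "d < \<alpha>" by blast
    show "\<alpha> \<in> ?E"
    proof (intro CollectI conjI allI impI)
      show "\<xi> < \<alpha>" using d by auto
    next
      fix a assume "a < \<alpha>"
      show "\<alpha> \<in> D a"
      proof -
        have C: "\<forall>\<alpha>. (\<exists>b. b < \<alpha>) \<and> (\<forall>b<\<alpha>. \<exists>d\<in>D a. b < d \<and> d < \<alpha>) \<longrightarrow> \<alpha> \<in> D a"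
          using cl[of a] unfolding club_def by (rule conjunct2)
        have "\<forall>b<\<alpha>. \<exists>d\<in>D a. b < d \<and> d < \<alpha>"
        proof (intro allI impI)
          fix b assume "b < \<alpha>"
          hence "max a b < \<alpha>" using \<open>a < \<alpha>\<close> by simp
          then obtain d' where "d' \<in> ?E" "max a b < d'" "d' < \<alpha>" using A by blast
          thus "\<exists>d\<in>D a. b < d \<and> d < \<alpha>" by auto
        qed
        thus "\<alpha> \<in> D a" using C \<open>a < \<alpha>\<close> by blast
      qed
    qed
  qed
qed

lemma first_n_range:
  fixes f :: "nat \<Rightarrow> 'a::wellorder"
  assumes "strict_mono f"
  shows "first_n (range f) j = f ` {..<j}"
proof -
  have seg: "{b\<in>range f. b < f i} = f ` {..<i}" for i
    using assms by (auto simp: strict_mono_less)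
  have inj: "inj f" using assms strict_mono_imp_inj_on by blast
  have c: "card (f ` {..<i}) = i" for i using inj by (simp add: card_image inj_on_subset)
  show ?thesis unfolding first_n_def using seg c by auto
qed

definition good :: "'a::wellorder set \<Rightarrow> ('a \<Rightarrow> 'a set) \<Rightarrow> 'a set \<Rightarrow> bool" where
  "good S C P \<longleftrightarrow> (\<forall>D. club D \<longrightarrow> (\<exists>\<gamma>\<in>S. first_n (C \<gamma>) (card P) = P \<and> C \<gamma> - P \<subseteq> D))"

lemma good_step:
  fixes S :: "'a::wellorder set" and C :: "'a \<Rightarrow> 'a set"
  assumes R: "uncountable_regular_cardinal TYPE('a)"
    and om: "\<forall>\<gamma>\<in>S. otp_omega (C \<gamma>)"
    and g: "good S C P"
  shows "\<exists>a. \<xi> < a \<and> a \<notin> P \<and> (\<forall>p\<in>P. p < a) \<and> good S C (insert a P)"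
proof (rule ccontr)
  assume H: "\<not> ?thesis"
  let ?W = "\<lambda>Q E. \<exists>\<gamma>\<in>S. first_n (C \<gamma>) (card Q) = Q \<and> C \<gamma> - Q \<subseteq> E"
  define E where "E a = (if good S C (insert a P) then UNIV else (SOME E. club E \<and> \<not> ?W (insert a P) E))" for a
  have clE: "club (E a)" for a
  proof (cases "good S C (insert a P)")
    case True thus ?thesis unfolding E_def using club_UNIV[OF R] by simp
  next
    case False
    hence "\<exists>E. club E \<and> \<not> ?W (insert a P) E" unfolding good_def by blast
    from someI_ex[OF this] False show ?thesis unfolding E_def by simp
  qed
  have badE: "\<not> ?W (insert a P) (E a)" if "\<not> good S C (insert a P)" for a
  proof -
    have "\<exists>E. club E \<and> \<not> ?W (insert a P) E" using that unfolding good_def by blast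
    from someI_ex[OF this] that show ?thesis unfolding E_def by simp
  qed
  let ?D = "{x. \<xi> < x \<and> (\<forall>a<x. x \<in> E a)}"
  have "club ?D" by (rule diag_club[OF R clE])
  then obtain \<gamma> where \<gamma>: "\<gamma> \<in> S" "first_n (C \<gamma>) (card P) = P" "C \<gamma> - P \<subseteq> ?D"
    using g unfolding good_def by blast
  obtain f :: "nat \<Rightarrow> 'a" where f: "strict_mono f" "range f = C \<gamma>" using om \<gamma>(1) unfolding otp_omega_def by meson
  define j where "j = card P"
  have P: "P = f ` {..<j}" using \<gamma>(2) first_n_range[OF f(1)] f(2) unfolding j_def by simp
  define a where "a = f j"
  have aP: "a \<notin> P" unfolding P a_def using f(1) by (auto simp: strict_mono_eq)
  have Pa: "\<forall>p\<in>P. p < a" unfolding P a_def using f(1) by (auto simp: strict_mono_less)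
  have "a \<in> ?D" using \<gamma>(3) aP f(2) unfolding a_def by blast
  hence xa: "\<xi> < a" by simp
  with H aP Pa have ng: "\<not> good S C (insert a P)" by blast
  have fin: "finite P" unfolding P by simp
  have "card (insert a P) = Suc j" using fin aP unfolding j_def by simp
  hence "first_n (C \<gamma>) (card (insert a P)) = insert a P"
    using first_n_range[OF f(1)] f(2) P unfolding a_def by (simp add: lessThan_Suc)
  moreover have "C \<gamma> - insert a P \<subseteq> E a"
  proof
    fix x assume x: "x \<in> C \<gamma> - insert a P"
    then obtain i where i: "x = f i" using f(2) by blast
    have "\<not> i \<le> j" using x unfolding i P a_def by (auto simp: le_less)
    hence "a < x" unfolding i a_def using f(1) by (simp add: strict_mono_less)
    moreover have "x \<in> ?D" using x \<gamma>(3) by blast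
    ultimately show "x \<in> E a" by blast
  qed
  ultimately have "?W (insert a P) (E a)" using \<gamma>(1) by blast
  with badE[OF ng] show False by blast
qed

lemma good_empty:
  assumes R: "uncountable_regular_cardinal TYPE('a::wellorder)"
    and cg: "club_guessing S (C :: 'a \<Rightarrow> 'a set)"
  shows "good S C {}"
  unfolding good_def
proof (intro allI impI)
  fix D :: "'a set" assume "club D"
  hence "stationary {\<delta>\<in>S. C \<delta> \<subseteq> D}" using cg unfolding club_guessing_def by blast
  hence "{\<delta>\<in>S. C \<delta> \<subseteq> D} \<inter> UNIV \<noteq> {}" using club_UNIV[OF R] unfolding stationary_def by blast
  thus "\<exists>\<gamma>\<in>S. first_n (C \<gamma>) (card {}) = {} \<and> C \<gamma> - {} \<subseteq> D" by (auto simp: first_n_def)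
qed

lemma construct:
  fixes S :: "'a::wellorder set" and C :: "'a \<Rightarrow> 'a set" and t :: "nat \<Rightarrow> nat"
  assumes R: "uncountable_regular_cardinal TYPE('a)"
    and om: "\<forall>\<gamma>\<in>S. otp_omega (C \<gamma>)"
    and g0: "good S C {}"
  shows "\<exists>x::nat\<Rightarrow>'a. (\<forall>k l. l < k \<longrightarrow> k < i \<longrightarrow> x l < x k) \<and>
     good S C (x ` {k. k < i \<and> t k = 0}) \<and> good S C (x ` {k. k < i \<and> t k \<noteq> 0})"
proof (induction i)
  case 0
  show ?case using g0 by simp
next
  case (Suc i)
  then obtain x :: "nat \<Rightarrow> 'a" where x: "\<forall>k l. l < k \<longrightarrow> k < i \<longrightarrow> x l < x k"
    "good S C (x ` {k. k < i \<and> t k = 0})" "good S C (x ` {k. k < i \<and> t k \<noteq> 0})" by blast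
  define \<xi> where "\<xi> = Max (x ` {..i})"
  have xle: "k < i \<Longrightarrow> x k \<le> \<xi>" for k unfolding \<xi>_def by (rule Max_ge) auto
  show ?case
  proof (cases "t i = 0")
    case True
    obtain a where a: "\<xi> < a" "good S C (insert a (x ` {k. k < i \<and> t k = 0}))"
      using good_step[OF R om x(2), of \<xi>] by blast
    define x' where "x' = x(i := a)"
    have s1: "x' ` {k. k < Suc i \<and> t k = 0} = insert a (x ` {k. k < i \<and> t k = 0})"
      unfolding x'_def using True by (auto simp: less_Suc_eq image_iff)
    have s2: "x' ` {k. k < Suc i \<and> t k \<noteq> 0} = x ` {k. k < i \<and> t k \<noteq> 0}"
      unfolding x'_def using True by (auto simp: less_Suc_eq image_iff)
    have mono: "\<forall>k l. l < k \<longrightarrow> k < Suc i \<longrightarrow> x' l < x' k"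
      unfolding x'_def using x(1) xle a(1) by (auto simp: less_Suc_eq intro: le_less_trans[OF xle])
    show ?thesis by (rule exI[of _ x']) (use mono s1 s2 a(2) x in simp)
  next
    case False
    obtain a where a: "\<xi> < a" "good S C (insert a (x ` {k. k < i \<and> t k \<noteq> 0}))"
      using good_step[OF R om x(3), of \<xi>] by blast
    define x' where "x' = x(i := a)"
    have s1: "x' ` {k. k < Suc i \<and> t k \<noteq> 0} = insert a (x ` {k. k < i \<and> t k \<noteq> 0})"
      unfolding x'_def using False by (auto simp: less_Suc_eq image_iff)
    have s2: "x' ` {k. k < Suc i \<and> t k = 0} = x ` {k. k < i \<and> t k = 0}"
      unfolding x'_def using False by (auto simp: less_Suc_eq image_iff)
    have mono: "\<forall>k l. l < k \<longrightarrow> k < Suc i \<longrightarrow> x' l < x' k"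
      unfolding x'_def using x(1) xle a(1) by (auto simp: less_Suc_eq intro: le_less_trans[OF xle])
    show ?thesis by (rule exI[of _ x']) (use mono s1 s2 a(2) x in simp)
  qed
qed

lemma goodD: "good S C P \<Longrightarrow> club D \<Longrightarrow> \<exists>\<gamma>\<in>S. first_n (C \<gamma>) (card P) = P \<and> C \<gamma> - P \<subseteq> D"
  unfolding good_def by simp

theorem lemma3p4:
  fixes S :: "'a::wellorder set" and C :: "'a \<Rightarrow> 'a set"
    and n :: nat and t :: "nat \<Rightarrow> nat"
  assumes "uncountable_regular_cardinal TYPE('a)"
    and "S \<subseteq> {\<alpha>. cof_omega \<alpha>}"
    and "stationary S"
    and "club_guessing S C"
    and "disjoint_type n t"
  shows "\<exists>\<gamma>\<in>S. \<exists>\<delta>\<in>S. \<gamma> < \<delta> \<and>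
           first_n (C \<gamma>) n \<inter> first_n (C \<delta>) n = {} \<and>
           card (first_n (C \<gamma>) n) = n \<and> card (first_n (C \<delta>) n) = n \<and>
           (\<forall>i<2*n. tp (first_n (C \<gamma>) n) (first_n (C \<delta>) n) i = t i)"
proof -
  note R = assms(1)
  have om: "\<forall>\<gamma>\<in>S. otp_omega (C \<gamma>)" and ci: "\<forall>\<gamma>\<in>S. club_in \<gamma> (C \<gamma>)"
    using assms(4) unfolding club_guessing_def by auto
  have t01: "\<forall>i<2*n. t i \<in> {0,1}" and cz: "card {i. i < 2*n \<and> t i = 0} = n"
    and co: "card {i. i < 2*n \<and> t i = 1} = n" using assms(5) unfolding disjoint_type_def by auto
  define m where "m = 2*n"
  obtain x :: "nat \<Rightarrow> 'a" where x: "\<forall>k l. l < k \<longrightarrow> k < m \<longrightarrow> x l < x k"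
    "good S C (x ` {k. k < m \<and> t k = 0})" "good S C (x ` {k. k < m \<and> t k \<noteq> 0})"
    using construct[OF R om good_empty[OF R assms(4)], where i=m and t=t] by blast
  have inj: "inj_on x {..<m}"
  proof (rule inj_onI)
    fix k l assume "k \<in> {..<m}" "l \<in> {..<m}" "x k = x l"
    show "k = l"
    proof (rule ccontr)
      assume "k \<noteq> l"
      hence "k < l \<or> l < k" by arith
      thus False
      proof
        assume "k < l" hence "x k < x l" using x(1) \<open>l \<in> {..<m}\<close> by simp
        thus False using \<open>x k = x l\<close> by simp
      next
        assume "l < k" hence "x l < x k" using x(1) \<open>k \<in> {..<m}\<close> by simp
        thus False using \<open>x k = x l\<close> by simp
      qed
    qed
  qed
  define Z where "Z = {k. k < m \<and> t k = 0}"
  define Q where "Q = {k. k < m \<and> t k \<noteq> 0}"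
  have Q1: "Q = {k. k < m \<and> t k = 1}" unfolding Q_def m_def using t01 by auto
  define A where "A = x ` Z"
  define B where "B = x ` Q"
  have "Z \<subseteq> {..<m}" unfolding Z_def by auto
  hence "card A = card Z" unfolding A_def by (intro card_image inj_on_subset[OF inj])
  hence cA: "card A = n" using cz unfolding Z_def m_def by simp
  have "Q \<subseteq> {..<m}" unfolding Q_def by auto
  hence "card B = card Q" unfolding B_def by (intro card_image inj_on_subset[OF inj])
  hence cB: "card B = n" using co unfolding Q1 m_def by simp
  have disj: "A \<inter> B = {}"
  proof (rule ccontr)
    assume "A \<inter> B \<noteq> {}"
    then obtain k l where kl: "k \<in> Z" "l \<in> Q" "x k = x l" unfolding A_def B_def by blast
    hence "k = l" using inj_onD[OF inj kl(3)] unfolding Z_def Q_def by simp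
    thus False using kl unfolding Z_def Q_def by simp
  qed
  obtain \<gamma> where \<gamma>: "\<gamma> \<in> S" "first_n (C \<gamma>) n = A"
    using goodD[OF x(2) club_UNIV[OF R]] unfolding A_def[symmetric] Z_def[symmetric] cA by blast
  have clg: "club {y. \<gamma> < y}" unfolding club_def unbounded_def
  proof (intro conjI allI impI)
    fix a obtain y where "max a \<gamma> < y" using no_max[OF R] by blast
    thus "\<exists>x\<in>{y. \<gamma> < y}. a \<le> x" by auto
  next
    fix \<alpha> :: 'a assume "(\<exists>b. b < \<alpha>) \<and> (\<forall>b<\<alpha>. \<exists>d\<in>{y. \<gamma> < y}. b < d \<and> d < \<alpha>)"
    thus "\<alpha> \<in> {y. \<gamma> < y}" by auto
  qed
  obtain \<delta> where \<delta>: "\<delta> \<in> S" "first_n (C \<delta>) n = B" "C \<delta> - B \<subseteq> {y. \<gamma> < y}"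
    using goodD[OF x(3) clg] unfolding B_def[symmetric] Q_def[symmetric] cB by blast
  obtain f :: "nat \<Rightarrow> 'a" where f: "strict_mono f" "range f = C \<delta>" using om \<delta>(1) unfolding otp_omega_def by meson
  have "inj f" using f(1) by (rule strict_mono_imp_inj_on)
  have "infinite (C \<delta>)"
  proof
    assume "finite (C \<delta>)"
    hence "finite (f ` UNIV)" using f(2) by simp
    hence "finite (UNIV :: nat set)" using \<open>inj f\<close> by (rule finite_imageD)
    thus False by simp
  qed
  moreover have "finite B" unfolding B_def Q_def by simp
  ultimately have "infinite (C \<delta> - B)" by (simp add: Diff_infinite_finite)
  hence "C \<delta> - B \<noteq> {}" by (metis finite.emptyI)
  then obtain y where "y \<in> C \<delta> - B" by blast
  hence "\<gamma> < y" "y < \<delta>" using \<delta>(3) ci \<delta>(1) unfolding club_in_def by auto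
  hence gd: "\<gamma> < \<delta>" by simp
  have AB: "A \<union> B = x ` {..<m}" unfolding A_def B_def Z_def Q_def by auto
  have sl: "sorted_list_of_set (A \<union> B) = map x [0..<m]"
    unfolding AB
  proof (subst sorted_list_of_set_unique[symmetric])
    show "finite (x ` {..<m})" by simp
    show "sorted_wrt (<) (map x [0..<m]) \<and> set (map x [0..<m]) = x ` {..<m} \<and> length (map x [0..<m]) = card (x ` {..<m})"
    proof (intro conjI)
      show "sorted_wrt (<) (map x [0..<m])" unfolding sorted_wrt_iff_nth_less using x(1) by simp
      show "set (map x [0..<m]) = x ` {..<m}" by (simp add: atLeast0LessThan)
      show "length (map x [0..<m]) = card (x ` {..<m})" using card_image[OF inj] by simp
    qed
  qed
  have tpv: "tp A B i = t i" if i: "i < 2*n" for i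
  proof -
    have "sorted_list_of_set (A \<union> B) ! i = x i" using sl i unfolding m_def by simp
    moreover have "x i \<in> A \<longleftrightarrow> t i = 0"
    proof
      assume "x i \<in> A"
      then obtain k where "k \<in> Z" "x i = x k" unfolding A_def by blast
      moreover hence "i = k" using inj_onD[OF inj] i unfolding Z_def m_def by simp
      ultimately show "t i = 0" unfolding Z_def by simp
    qed (use i in \<open>auto simp: A_def Z_def m_def\<close>)
    ultimately show ?thesis unfolding tp_def using t01 i by auto
  qed
  have "\<gamma> < \<delta> \<and>
           first_n (C \<gamma>) n \<inter> first_n (C \<delta>) n = {} \<and>
           card (first_n (C \<gamma>) n) = n \<and> card (first_n (C \<delta>) n) = n \<and>
           (\<forall>i<2*n. tp (first_n (C \<gamma>) n) (first_n (C \<delta>) n) i = t i)"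
    unfolding \<gamma>(2) \<delta>(2) using gd disj cA cB tpv by simp
  thus ?thesis using \<gamma>(1) \<delta>(1) by blast
qed

end
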